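(* For all odd integers $n\ge1$ and real numbers $a\ge1$, $x,y\in(0,\pi)$, we have $\Theta_{n,a}(x,y)\ge\sin(x)\sin(y)$. Equality holds if and only if $n=1$.
   Context: For a real number $a$ and integers $0\le m$, $\binom{m+a}{m}=\frac{(a+1)(a+2)\cdots(a+m)}{m!}$ (equal to $1$ when $m=0$). For an integer $n\ge1$, $\Theta_{n,a}(x,y)=\sum_{j=1}^n\binom{n+a-j}{n-j}\frac{\sin(jx)\sin(jy)}{j}$. *)

theory Defs
  imports Complex_Main
begin

text \<open>Generalized binomial coefficient binom(m+a, m) = (a+1)(a+2)...(a+m)/m!, equal to 1 for m = 0.\<close>
definition binom_shift :: "nat \<Rightarrow> real \<Rightarrow> real" where
  "binom_shift m a = (\<Prod>i=1..m. a + real i) / fact m"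

definition Theta :: "nat \<Rightarrow> real \<Rightarrow> real \<Rightarrow> real \<Rightarrow> real" where
  "Theta n a x y = (\<Sum>j=1..n. binom_shift (n - j) a * (sin (real j * x) * sin (real j * y)) / real j)"

end

theory Submission
  imports Defs
begin

definition Lf :: "(nat \<Rightarrow> real) \<Rightarrow> nat \<Rightarrow> real \<Rightarrow> real" where
  "Lf w n t = (\<Sum>j=1..n. w j * (1 - cos (real j * t)) / real j)"

definition Kf :: "(nat \<Rightarrow> real) \<Rightarrow> nat \<Rightarrow> real \<Rightarrow> real" where
  "Kf w n t = (\<Sum>j=1..n. w j * sin (real j * t))"

lemma Lf_deriv: "(Lf w n has_real_derivative Kf w n t) (at t)"
proof -
  have "((\<lambda>t. \<Sum>j=1..n. w j * (1 - cos (real j * t)) / real j) has_real_derivative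
        (\<Sum>j=1..n. w j * sin (real j * t))) (at t)"
  proof (rule DERIV_sum)
    fix j assume j: "j \<in> {1..n}"
    show "((\<lambda>t. w j * (1 - cos (real j * t)) / real j) has_real_derivative
        w j * sin (real j * t)) (at t)"
      using j by (auto intro!: derivative_eq_intros simp: field_simps)
  qed
  then show ?thesis unfolding Lf_def[abs_def] Kf_def by simp
qed

lemma Lf_cont: "continuous_on A (Lf w n)"
  by (meson DERIV_isCont Lf_deriv continuous_at_imp_continuous_on)

lemma Lf_even: "Lf w n (-t) = Lf w n t"
  unfolding Lf_def by simp

lemma Lf_refl: "Lf w n (2*pi - t) = Lf w n t"
proof -
  have "cos (real j * (2*pi - t)) = cos (real j * t)" for j :: nat
  proof -
    have "real j * (2*pi - t) = 2 * real j * pi - real j * t" by (simp add: algebra_simps)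
    then show ?thesis by (simp add: cos_diff)
  qed
  then show ?thesis unfolding Lf_def by simp
qed

lemma sum_split:
  "(\<Sum>j=1..n. w j * (sin (real j * x) * sin (real j * y)) / real j) = (Lf w n (x+y) - Lf w n (x-y))/2"
proof -
  have "w j * (sin (real j * x) * sin (real j * y)) / real j =
        (w j * (1 - cos (real j * (x+y))) / real j - w j * (1 - cos (real j * (x-y))) / real j)/2" for j
  proof -
    have a: "cos (real j * (x+y)) = cos (real j * x) * cos (real j * y) - sin (real j * x) * sin (real j * y)"
      by (simp add: distrib_left cos_add)
    have b: "cos (real j * (x-y)) = cos (real j * x) * cos (real j * y) + sin (real j * x) * sin (real j * y)"
      by (simp add: right_diff_distrib cos_diff)
    show ?thesis unfolding a b by (cases "j = 0") (auto simp: field_simps)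
  qed
  then have "(\<Sum>j=1..n. w j * (sin (real j * x) * sin (real j * y)) / real j) =
     (\<Sum>j=1..n. (w j * (1 - cos (real j * (x+y))) / real j - w j * (1 - cos (real j * (x-y))) / real j)/2)"
    by (intro sum.cong) auto
  then show ?thesis unfolding Lf_def by (simp only: sum_divide_distrib[symmetric] sum_subtractf)
qed

lemma Lf_mono:
  assumes K: "\<And>t. 0 < t \<Longrightarrow> t < pi \<Longrightarrow> Kf w n t \<ge> 0" and "0 \<le> u" "u \<le> v" "v \<le> pi"
  shows "Lf w n u \<le> Lf w n v"
proof (rule DERIV_nonneg_imp_increasing_open[OF \<open>u \<le> v\<close>])
  fix t assume "u < t" "t < v"
  then show "\<exists>y. DERIV (Lf w n) t :> y \<and> y \<ge> 0" using Lf_deriv K assms by force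
qed (rule Lf_cont)

lemma Lf_strict0:
  assumes K: "\<And>t. u < t \<Longrightarrow> t < v \<Longrightarrow> Kf w n t > 0" and "u < v"
  shows "Lf w n u < Lf w n v"
proof (rule DERIV_pos_imp_increasing_open[OF \<open>u < v\<close>])
  fix t assume "u < t" "t < v"
  then show "\<exists>y. DERIV (Lf w n) t :> y \<and> y > 0" using Lf_deriv K by blast
qed (rule Lf_cont)

lemma Lf_strict:
  assumes K: "\<And>t. 0 < t \<Longrightarrow> t < pi \<Longrightarrow> t \<noteq> c \<Longrightarrow> Kf w n t > 0" and "0 \<le> u" "u < v" "v \<le> pi"
  shows "Lf w n u < Lf w n v"
proof (cases "u < c \<and> c < v")
  case True
  have "Lf w n u < Lf w n c" by (rule Lf_strict0) (use assms True in auto)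
  also have "\<dots> < Lf w n v" by (rule Lf_strict0) (use assms True in auto)
  finally show ?thesis .
next
  case False
  show ?thesis by (rule Lf_strict0) (use assms False in auto)
qed

lemma key_reduce:
  assumes "0 < x" "x < pi" "0 < y" "y < pi"
  obtains u v where "0 \<le> u" "u < v" "v \<le> pi" "Lf w n (x+y) = Lf w n v" "Lf w n (x-y) = Lf w n u"
proof -
  have u: "Lf w n (x-y) = Lf w n \<bar>x-y\<bar>"
    by (cases "x \<ge> y") (auto simp: Lf_even[of w n "x - y", symmetric])
  show ?thesis
  proof (cases "x + y \<le> pi")
    case True
    show ?thesis by (rule that[OF _ _ True _ u]) (use assms in auto)
  next
    case False
    have "Lf w n (x+y) = Lf w n (2*pi - (x+y))" by (simp add: Lf_refl)
    then show ?thesis by (intro that[OF _ _ _ _ u]) (use assms False in auto)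
  qed
qed

lemma main_nonneg:
  assumes K: "\<And>t. 0 < t \<Longrightarrow> t < pi \<Longrightarrow> Kf w n t \<ge> 0"
    and "0 < x" "x < pi" "0 < y" "y < pi"
  shows "(\<Sum>j=1..n. w j * (sin (real j * x) * sin (real j * y)) / real j) \<ge> 0"
proof -
  obtain u v where uv: "0 \<le> u" "u < v" "v \<le> pi" "Lf w n (x+y) = Lf w n v" "Lf w n (x-y) = Lf w n u"
    using key_reduce assms(2-5) by blast
  have "Lf w n u \<le> Lf w n v" by (rule Lf_mono[OF K]) (use uv in auto)
  then show ?thesis unfolding sum_split uv by simp
qed

lemma main_pos:
  assumes K: "\<And>t. 0 < t \<Longrightarrow> t < pi \<Longrightarrow> t \<noteq> c \<Longrightarrow> Kf w n t > 0"
    and "0 < x" "x < pi" "0 < y" "y < pi"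
  shows "(\<Sum>j=1..n. w j * (sin (real j * x) * sin (real j * y)) / real j) > 0"
proof -
  obtain u v where uv: "0 \<le> u" "u < v" "v \<le> pi" "Lf w n (x+y) = Lf w n v" "Lf w n (x-y) = Lf w n u"
    using key_reduce assms(2-5) by blast
  have "Lf w n u < Lf w n v" by (rule Lf_strict[OF K]) (use uv in auto)
  then show ?thesis unfolding sum_split uv by simp
qed


lemma sin_bound: "0 \<le> t \<Longrightarrow> t \<le> pi \<Longrightarrow> \<bar>sin (real k * t)\<bar> \<le> real k * sin t"
proof (induction k)
  case 0 then show ?case by simp
next
  case (Suc k)
  have s: "sin t \<ge> 0" using Suc.prems sin_ge_zero by blast
  have "sin (real (Suc k) * t) = sin (real k * t) * cos t + cos (real k * t) * sin t"
    by (simp add: distrib_right sin_add)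
  also have "\<bar>\<dots>\<bar> \<le> \<bar>sin (real k * t)\<bar> * \<bar>cos t\<bar> + \<bar>cos (real k * t)\<bar> * sin t"
    using s by (metis abs_mult abs_of_nonneg abs_triangle_ineq)
  also have "\<dots> \<le> real k * sin t * 1 + 1 * sin t"
    using Suc s by (intro add_mono mult_mono) auto
  finally show ?case by (simp add: algebra_simps)
qed

lemma sin_bound_strict: "0 < t \<Longrightarrow> t < pi \<Longrightarrow> k \<ge> 2 \<Longrightarrow> \<bar>sin (real k * t)\<bar> < real k * sin t"
proof -
  assume t: "0 < t" "t < pi" and k: "k \<ge> 2"
  obtain m where m: "k = Suc m" "m \<ge> 1" using k by (cases k) auto
  have s: "sin t > 0" using t sin_gt_zero by blast
  have c1: "cos t < 1" using t by (metis cos_monotone_0_pi cos_zero less_eq_real_def)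
  have c2: "cos t > -1" using cos_monotone_0_pi[of t pi] t by simp
  have c: "\<bar>cos t\<bar> < 1" using c1 c2 by linarith
  have sb: "\<bar>sin (real m * t)\<bar> \<le> real m * sin t" using t by (intro sin_bound) auto
  have "sin (real k * t) = sin (real m * t) * cos t + cos (real m * t) * sin t"
    by (simp add: m distrib_right sin_add)
  also have "\<bar>\<dots>\<bar> \<le> \<bar>sin (real m * t)\<bar> * \<bar>cos t\<bar> + \<bar>cos (real m * t)\<bar> * sin t"
    using s by (metis abs_mult abs_of_nonneg abs_triangle_ineq less_imp_le)
  also have "\<dots> \<le> real m * sin t * \<bar>cos t\<bar> + 1 * sin t"
    using sb s by (intro add_mono mult_mono) auto
  also have "\<dots> < real m * sin t * 1 + 1 * sin t"
    using c s m by (intro add_strict_right_mono mult_strict_left_mono) auto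
  finally show ?thesis by (simp add: m algebra_simps)
qed

lemma D_id: "2*(1-cos t)*(\<Sum>j=1..m. sin (real j*t)) = sin t + sin (real m*t) - sin (real (Suc m)*t)"
proof (induction m)
  case 0 then show ?case by simp
next
  case (Suc m)
  have e1: "real (Suc (Suc m)) * t = real (Suc m) * t + t" "real m * t = real (Suc m) * t - t"
    by (simp_all add: algebra_simps)
  have e: "sin (real (Suc (Suc m)) * t) = sin (real (Suc m) * t) * cos t + cos (real (Suc m) * t) * sin t"
    "sin (real m * t) = sin (real (Suc m) * t) * cos t - cos (real (Suc m) * t) * sin t"
    by (simp_all only: e1 sin_add sin_diff)
  have "2*(1-cos t)*(\<Sum>j=1..Suc m. sin (real j*t)) = 2*(1-cos t)*(\<Sum>j=1..m. sin (real j*t)) + 2*(1-cos t)*sin (real (Suc m) * t)"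
    by (simp add: algebra_simps)
  also have "\<dots> = sin t + sin (real (Suc m)*t) - sin (real (Suc (Suc m))*t)"
    unfolding Suc.IH using e by (simp add: algebra_simps)
  finally show ?case .
qed

definition w1 :: "nat \<Rightarrow> nat \<Rightarrow> real" where "w1 m j = real m + 1 - real j"

lemma K1_id: "2*(1-cos t)*Kf (w1 m) m t = real (Suc m) * sin t - sin (real (Suc m)*t)"
proof (induction m)
  case 0 then show ?case by (simp add: Kf_def)
next
  case (Suc m)
  have "Kf (w1 (Suc m)) (Suc m) t = Kf (w1 m) m t + (\<Sum>j=1..Suc m. sin (real j*t))"
    by (simp add: Kf_def w1_def sum.distrib[symmetric] algebra_simps)
  then have "2*(1-cos t)*Kf (w1 (Suc m)) (Suc m) t = 2*(1-cos t)*Kf (w1 m) m t + 2*(1-cos t)*(\<Sum>j=1..Suc m. sin (real j*t))"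
    by (simp add: algebra_simps)
  also have "\<dots> = real (Suc (Suc m)) * sin t - sin (real (Suc (Suc m))*t)"
    unfolding Suc.IH D_id by (simp add: algebra_simps)
  finally show ?case .
qed

lemma K1_nonneg: "0 < t \<Longrightarrow> t < pi \<Longrightarrow> Kf (w1 m) m t \<ge> 0"
proof -
  assume t: "0 < t" "t < pi"
  have c: "cos t < 1" using t
    by (metis cos_monotone_0_pi cos_zero less_eq_real_def)
  have "sin (real (Suc m)*t) \<le> real (Suc m) * sin t"
    using sin_bound[of t "Suc m"] t by linarith
  then have "2*(1-cos t)*Kf (w1 m) m t \<ge> 0" unfolding K1_id by simp
  then show ?thesis using c by (simp add: zero_le_mult_iff)
qed

definition w2 :: "nat \<Rightarrow> nat \<Rightarrow> real" where "w2 m j = w1 m j - (if j = 1 then 1 else 0)"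

lemma sum_first: fixes n :: nat assumes n: "n \<ge> 1" shows "(\<Sum>j=1..n. (if j = 1 then 1 else 0) * f j) = (f 1 :: real)"
proof -
  have "(\<Sum>j=1..n. (if j = 1 then 1 else 0) * f j) = (if 1 = (1::nat) then 1 else 0) * f 1 + (\<Sum>j=Suc 1..n. (if j = 1 then 1 else 0) * f j)"
    by (rule sum.atLeast_Suc_atMost) (use n in auto)
  also have "(\<Sum>j=Suc 1..n. (if j = 1 then 1 else 0) * f j) = 0"
    by (intro sum.neutral) auto
  finally show ?thesis by simp
qed

lemma K2_eq: "n \<ge> 1 \<Longrightarrow> Kf (w2 n) n t = Kf (w1 n) n t - sin t"
  unfolding Kf_def w2_def left_diff_distrib sum_subtractf
  using sum_first[of n "\<lambda>j. sin (real j * t)"] by simp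

lemma K2_id:
  assumes "n = 2*k+1"
  shows "2*(1-cos t)*Kf (w2 n) n t = 2 * (real k * sin t - cos (real (k+2) * t) * sin (real k * t))"
proof -
  have "2*(1-cos t)*Kf (w2 n) n t = 2*(1-cos t)*Kf (w1 n) n t - 2*(1-cos t) * sin t"
  proof -
    have h: "Kf (w1 n) n t = Kf (w2 n) n t + sin t" using assms K2_eq[of n t] by simp
    show ?thesis unfolding h by (simp add: algebra_simps)
  qed
  also have "\<dots> = real (Suc n) * sin t - sin (real (Suc n)*t) - 2*(1-cos t) * sin t"
    by (simp only: K1_id)
  also have "\<dots> = 2 * (real k * sin t - cos (real (k+2) * t) * sin (real k * t))"
  proof -
    have a: "real (Suc n) * t = real (k+2) * t + real k * t" using assms by (simp add: algebra_simps)
    have b: "sin (2 * t) = sin (real (k+2) * t - real k * t)" by (simp add: algebra_simps)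
    have "sin (real (Suc n)*t) - sin (2*t) = 2 * cos (real (k+2) * t) * sin (real k * t)"
      unfolding a b sin_add sin_diff by simp
    moreover have d: "sin (t*2) = 2*sin t*cos t" using sin_double[of t] by (simp add: mult.commute)
    ultimately show ?thesis using assms by (simp add: d algebra_simps)
  qed
  finally show ?thesis .
qed

lemma K2_nonneg: "odd n \<Longrightarrow> 0 < t \<Longrightarrow> t < pi \<Longrightarrow> Kf (w2 n) n t \<ge> 0"
proof -
  assume n: "odd n" and t: "0 < t" "t < pi"
  obtain k where k: "n = 2*k+1" using n oddE by blast
  have c: "cos t < 1" using t by (metis cos_monotone_0_pi cos_zero less_eq_real_def)
  have s: "sin t \<ge> 0" using t sin_ge_zero by (simp add: less_imp_le)
  have "\<bar>cos (real (k+2) * t) * sin (real k * t)\<bar> \<le> 1 * (real k * sin t)"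
    unfolding abs_mult using sin_bound[of t k] t by (intro mult_mono) auto
  then have "2*(1-cos t)*Kf (w2 n) n t \<ge> 0" unfolding K2_id[OF k] using abs_le_D1 by fastforce
  then show ?thesis using c by (simp add: zero_le_mult_iff)
qed

lemma K2_pos: "odd n \<Longrightarrow> n \<ge> 3 \<Longrightarrow> 0 < t \<Longrightarrow> t < pi \<Longrightarrow> t \<noteq> 2*pi/3 \<Longrightarrow> Kf (w2 n) n t > 0"
proof -
  assume n: "odd n" "n \<ge> 3" and t: "0 < t" "t < pi" "t \<noteq> 2*pi/3"
  obtain k where k: "n = 2*k+1" using n oddE by blast
  have c: "cos t < 1" using t by (metis cos_monotone_0_pi cos_zero less_eq_real_def)
  have s: "sin t > 0" using t sin_gt_zero by blast
  have "real k * sin t - cos (real (k+2) * t) * sin (real k * t) > 0"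
  proof (cases "k \<ge> 2")
    case True
    have "\<bar>cos (real (k+2) * t) * sin (real k * t)\<bar> \<le> 1 * \<bar>sin (real k * t)\<bar>"
      unfolding abs_mult by (intro mult_right_mono) auto
    also have "\<dots> < real k * sin t" using sin_bound_strict[OF t(1,2) True] by simp
    finally show ?thesis by linarith
  next
    case False
    then have k1: "k = 1" using n k by auto
    have "cos (3 * t) \<noteq> 1"
    proof
      assume "cos (3*t) = 1"
      then obtain m :: int where m: "3*t = real_of_int m * 2 * pi" using cos_one_2pi_int by blast
      have h1: "0 < real_of_int m * 2 * pi" using m t by linarith
      have h2: "real_of_int m * 2 * pi < 4 * pi" using m t by linarith
      have "0 < real_of_int m" using h1 by (simp add: zero_less_mult_iff)
      moreover have "real_of_int m * 2 < 4" using h2 pi_gt_zero mult_less_cancel_right by fastforce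
      ultimately have "0 < m" "m < 2" by simp_all
      then have "m = 1" by simp
      then show False using m t by simp
    qed
    moreover have "cos (3*t) \<le> 1" by simp
    ultimately have "cos (3*t) < 1" by linarith
    then show ?thesis using k1 s by (simp add: mult_less_cancel_right2 numeral_3_eq_3 mult.commute)
  qed
  then have "2*(1-cos t)*Kf (w2 n) n t > 0" unfolding K2_id[OF k] by simp
  then show ?thesis using c by (simp add: zero_less_mult_iff)
qed


lemma prod_shift1: "(\<Prod>i=1..Suc m. f i) = f 1 * (\<Prod>i=1..m. f (Suc i) :: real)"
proof -
  have "(\<Prod>i=1..Suc m. f i) = f 1 * (\<Prod>i=Suc 1..Suc m. f i)"
    by (rule prod.atLeast_Suc_atMost) simp
  also have "(\<Prod>i=Suc 1..Suc m. f i) = (\<Prod>i=1..m. f (Suc i))"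
    by (rule prod.shift_bounds_cl_Suc_ivl)
  finally show ?thesis .
qed

lemma aux_field: "(F::real) > 0 \<Longrightarrow> r > 0 \<Longrightarrow> Q * (b + r) / (r * F) = Q / F + b * Q / (r * F)"
  by (simp add: field_simps)

lemma binom_step: "binom_shift (Suc m) b = binom_shift m b + binom_shift (Suc m) (b - 1)"
proof -
  define Q where "Q = (\<Prod>i=1..m. b + real i)"
  have p1: "(\<Prod>i=1..Suc m. b + real i) = Q * (b + real (Suc m))"
    unfolding Q_def by simp
  have p2: "(\<Prod>i=1..Suc m. b - 1 + real i) = b * Q"
    unfolding Q_def prod_shift1 by simp
  have f: "(fact (Suc m) :: real) = (real m + 1) * fact m" by (simp add: algebra_simps)
  have f0: "(fact m :: real) > 0" by simp
  have "Q * (b + real (Suc m)) / fact (Suc m) = Q / fact m + b * Q / fact (Suc m)"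
    unfolding f using aux_field[OF f0, of "real m + 1" Q b] by (simp add: add.commute)
  then show ?thesis unfolding binom_shift_def p1 p2 Q_def[symmetric] .
qed

lemma binom_sum1: "binom_shift m b = (\<Sum>i\<le>m. binom_shift i (b - 1))"
proof (induction m)
  case 0 then show ?case by (simp add: binom_shift_def)
next
  case (Suc m) then show ?case by (simp add: binom_step[of m b])
qed

lemma binom_sum2: "binom_shift m b = (\<Sum>i\<le>m. (real m + 1 - real i) * binom_shift i (b - 2))"
proof (induction m)
  case 0 then show ?case by (simp add: binom_shift_def)
next
  case (Suc m)
  have s1: "binom_shift (Suc m) (b - 1) = (\<Sum>i\<le>Suc m. binom_shift i (b - 2))"
    using binom_sum1[of "Suc m" "b - 1"] by simp
  have "(\<Sum>i\<le>Suc m. (real (Suc m) + 1 - real i) * binom_shift i (b - 2))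
      = (\<Sum>i\<le>m. (real m + 1 - real i) * binom_shift i (b - 2) + binom_shift i (b - 2)) + binom_shift (Suc m) (b - 2)"
    by (simp add: algebra_simps)
  also have "\<dots> = binom_shift m b + binom_shift (Suc m) (b - 1)"
    unfolding s1 Suc.IH sum.distrib by simp
  finally show ?case using binom_step[of m b] by simp
qed

lemma binom_nonneg: "a \<ge> 1 \<Longrightarrow> binom_shift i (a - 2) \<ge> 0"
  unfolding binom_shift_def by (intro divide_nonneg_pos prod_nonneg) auto

definition Tm :: "nat \<Rightarrow> real \<Rightarrow> real \<Rightarrow> real" where
  "Tm m x y = (\<Sum>j=1..m. w1 m j * (sin (real j * x) * sin (real j * y)) / real j)"

lemma Theta_decomp:
  "Theta n a x y = (\<Sum>i<n. binom_shift i (a - 2) * Tm (n - i) x y)"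
proof -
  define C where "C i = binom_shift i (a - 2)" for i
  define s where "s j = sin (real j * x) * sin (real j * y) / real j" for j
  define f where "f i j = C i * ((real n + 1 - real i - real j) * s j)" for i j
  have "Theta n a x y = (\<Sum>j\<in>{1..n}. \<Sum>i\<in>{i\<in>{..<n}. i + j \<le> n}. f i j)"
    unfolding Theta_def
  proof (rule sum.cong[OF refl])
    fix j assume j: "j \<in> {1..n}"
    have set: "{i\<in>{..<n}. i + j \<le> n} = {..n-j}" using j by auto
    have "binom_shift (n - j) a * (sin (real j * x) * sin (real j * y)) / real j
        = (\<Sum>i\<le>n-j. (real (n-j) + 1 - real i) * C i) * s j"
      unfolding s_def C_def binom_sum2[of "n-j" a] by simp
    also have "\<dots> = (\<Sum>i\<le>n-j. f i j)"
      unfolding sum_distrib_right f_def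
      by (intro sum.cong) (use j in \<open>auto simp: of_nat_diff\<close>)
    finally show "binom_shift (n - j) a * (sin (real j * x) * sin (real j * y)) / real j =
        (\<Sum>i\<in>{i\<in>{..<n}. i + j \<le> n}. f i j)" unfolding set .
  qed
  also have "\<dots> = (\<Sum>i\<in>{..<n}. \<Sum>j\<in>{j\<in>{1..n}. i + j \<le> n}. f i j)"
    by (rule sum.swap_restrict[symmetric]) auto
  also have "\<dots> = (\<Sum>i<n. C i * Tm (n - i) x y)"
  proof (rule sum.cong[OF refl])
    fix i assume i: "i \<in> {..<n}"
    have set: "{j\<in>{1..n}. i + j \<le> n} = {1..n-i}" using i by auto
    show "(\<Sum>j\<in>{j\<in>{1..n}. i + j \<le> n}. f i j) = C i * Tm (n - i) x y"
      unfolding set Tm_def sum_distrib_left f_def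
      by (intro sum.cong) (use i in \<open>auto simp: of_nat_diff w1_def s_def\<close>)
  qed
  finally show ?thesis unfolding C_def .
qed

theorem theorem3p7:
  fixes n :: nat and a x y :: real
  assumes "odd n" and "n \<ge> 1" and "a \<ge> 1"
    and "0 < x" and "x < pi" and "0 < y" and "y < pi"
  shows "Theta n a x y \<ge> sin x * sin y \<and> (Theta n a x y = sin x * sin y \<longleftrightarrow> n = 1)"
proof -
  have xy: "0 < x" "x < pi" "0 < y" "y < pi" using assms by auto
  have T2: "Tm n x y - sin x * sin y = (\<Sum>j=1..n. w2 n j * (sin (real j * x) * sin (real j * y)) / real j)"
    unfolding Tm_def w2_def left_diff_distrib diff_divide_distrib sum_subtractf
    using sum_first[OF assms(2), of "\<lambda>j. (sin (real j * x) * sin (real j * y)) / real j"]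
    by (simp add: mult.assoc)
  have Tn: "Tm n x y - sin x * sin y \<ge> 0"
    unfolding T2 by (rule main_nonneg[OF K2_nonneg[OF assms(1)] xy])
  have Tpos: "n \<ge> 3 \<Longrightarrow> Tm n x y - sin x * sin y > 0"
    unfolding T2 by (rule main_pos[where c="2*pi/3", OF K2_pos[OF assms(1)] xy]) auto
  have Tm_nonneg: "Tm m x y \<ge> 0" for m
    unfolding Tm_def by (rule main_nonneg[OF K1_nonneg xy])
  obtain n' where n': "n = Suc n'" using assms(2) by (cases n) auto
  have dec: "Theta n a x y = Tm n x y + (\<Sum>i<n'. binom_shift (Suc i) (a - 2) * Tm (n - Suc i) x y)"
    unfolding Theta_decomp n' sum.lessThan_Suc_shift by (simp add: binom_shift_def)
  have rest: "(\<Sum>i<n'. binom_shift (Suc i) (a - 2) * Tm (n - Suc i) x y) \<ge> 0"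
    using binom_nonneg[OF assms(3)] Tm_nonneg by (intro sum_nonneg mult_nonneg_nonneg) auto
  have ge: "Theta n a x y \<ge> sin x * sin y" using dec rest Tn by linarith
  moreover have "Theta n a x y = sin x * sin y \<longleftrightarrow> n = 1"
  proof
    assume eq: "Theta n a x y = sin x * sin y"
    show "n = 1"
    proof (rule ccontr)
      assume "n \<noteq> 1"
      then have "n \<ge> 3" using assms(1,2) by presburger
      then show False using Tpos dec rest eq by linarith
    qed
  next
    assume "n = 1"
    then show "Theta n a x y = sin x * sin y" by (simp add: Theta_def binom_shift_def)
  qed
  ultimately show ?thesis by blast
qed

end
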